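(* Let $N>0$, $m>0$, $F>0$, $\alpha>0$, $w>0$ be fixed with $Nm>\alpha$, and for $g\geq 0$, $\tau\in(0,1)$, $L_g\geq 0$ define \[ L=\frac{N\left[(1-\tau)(mL_g+\alpha F)+(mg+F)mN\right]}{\alpha+(Nm-\alpha)\tau},\qquad q=\frac{(1-\tau)(L+L_g-\alpha g)}{\left(Nm+\alpha(1-\tau)\right)(L+L_g)}, \] \[ p=\frac{L+L_g}{L+L_g-\alpha g}\left(mw+\frac{\alpha(1-\tau)w}{N}\right),\qquad \Pi=\left((L+L_g)q+g\right)(p-mw)-Fw, \] regarded as functions of $(g,\tau,L_g)$. If $\alpha>1-\tau$, then \[ \frac{\partial \Pi}{\partial g}>\frac{\partial \Pi}{\partial L_g}. \]
   Context: These are the symmetric-equilibrium private employment $L$, per-capita consumption $q$ of each variety, price $p$, and profit $\Pi$ of each firm in a monopolistic-competition general equilibrium model with a measure $N$ of firms, marginal and fixed labor inputs $m$ and $F$, CARA utility parameter $\alpha$, nominal wage $w$, income tax rate $\tau$, government purchase $g$ of each variety, and government employment $L_g$. Partial derivatives are taken in $(g,\tau,L_g)$ with other parameters fixed. *)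

theory Defs
  imports "HOL-Analysis.Analysis"
begin

definition L_eq :: "real \<Rightarrow> real \<Rightarrow> real \<Rightarrow> real \<Rightarrow> real \<Rightarrow> real \<Rightarrow> real \<Rightarrow> real \<Rightarrow> real" where
  "L_eq N m F \<alpha> w g \<tau> Lg =
     N * ((1 - \<tau>) * (m * Lg + \<alpha> * F) + (m * g + F) * m * N) / (\<alpha> + (N * m - \<alpha>) * \<tau>)"

definition q_eq :: "real \<Rightarrow> real \<Rightarrow> real \<Rightarrow> real \<Rightarrow> real \<Rightarrow> real \<Rightarrow> real \<Rightarrow> real \<Rightarrow> real" where
  "q_eq N m F \<alpha> w g \<tau> Lg =
     (let L = L_eq N m F \<alpha> w g \<tau> Lg in
      (1 - \<tau>) * (L + Lg - \<alpha> * g) / ((N * m + \<alpha> * (1 - \<tau>)) * (L + Lg)))"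

definition p_eq :: "real \<Rightarrow> real \<Rightarrow> real \<Rightarrow> real \<Rightarrow> real \<Rightarrow> real \<Rightarrow> real \<Rightarrow> real \<Rightarrow> real" where
  "p_eq N m F \<alpha> w g \<tau> Lg =
     (let L = L_eq N m F \<alpha> w g \<tau> Lg in
      (L + Lg) / (L + Lg - \<alpha> * g) * (m * w + \<alpha> * (1 - \<tau>) * w / N))"

definition Pi_eq :: "real \<Rightarrow> real \<Rightarrow> real \<Rightarrow> real \<Rightarrow> real \<Rightarrow> real \<Rightarrow> real \<Rightarrow> real \<Rightarrow> real" where
  "Pi_eq N m F \<alpha> w g \<tau> Lg =
     ((L_eq N m F \<alpha> w g \<tau> Lg + Lg) * q_eq N m F \<alpha> w g \<tau> Lg + g)
       * (p_eq N m F \<alpha> w g \<tau> Lg - m * w) - F * w"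

end

theory Submission
  imports Defs
begin

lemma Pi_closed:
  assumes N: "N > 0" and c: "N * m + \<alpha> * (1 - \<tau>) \<noteq> 0"
    and S: "L_eq N m F \<alpha> w g \<tau> Lg + Lg \<noteq> 0"
    and u: "L_eq N m F \<alpha> w g \<tau> Lg + Lg - \<alpha> * g \<noteq> 0"
  shows "Pi_eq N m F \<alpha> w g \<tau> Lg =
    (let S = L_eq N m F \<alpha> w g \<tau> Lg + Lg; c = N * m + \<alpha> * (1 - \<tau>) in
     w * ((1-\<tau>) * S / N - (1-\<tau>) * m * (S - \<alpha> * g) / c + c * g * S / (N * (S - \<alpha> * g)) - g * m - F))"
proof -
  define S where "S = L_eq N m F \<alpha> w g \<tau> Lg + Lg"
  define c where "c = N * m + \<alpha> * (1 - \<tau>)"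
  have S': "S \<noteq> 0" "S - \<alpha> * g \<noteq> 0" "c \<noteq> 0" using S u c by (auto simp: S_def c_def)
  have "Pi_eq N m F \<alpha> w g \<tau> Lg = (S * ((1 - \<tau>) * (S - \<alpha> * g) / (c * S)) + g) *
        (S / (S - \<alpha> * g) * (m * w + \<alpha> * (1 - \<tau>) * w / N) - m * w) - F * w"
    unfolding Pi_eq_def q_eq_def p_eq_def Let_def S_def c_def by (simp add: add.commute)
  also have "m * w + \<alpha> * (1 - \<tau>) * w / N = w * c / N" using N by (simp add: c_def field_simps)
  also have "(S * ((1 - \<tau>) * (S - \<alpha> * g) / (c * S)) + g) = (1 - \<tau>) * (S - \<alpha> * g) / c + g"
    using S' by simp
  finally have "Pi_eq N m F \<alpha> w g \<tau> Lg = ((1 - \<tau>) * (S - \<alpha> * g) / c + g) * (S / (S - \<alpha> * g) * (w * c / N) - m * w) - F * w" .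
  also have "\<dots> = w * ((1-\<tau>) * S / N - (1-\<tau>) * m * (S - \<alpha> * g) / c + c * g * S / (N * (S - \<alpha> * g)) - g * m - F)"
    using S' N by (simp add: field_simps)
  finally show ?thesis unfolding Let_def S_def c_def .
qed

theorem theorem6:
  fixes N m F \<alpha> w g \<tau> Lg :: real
  assumes "N > 0" "m > 0" "F > 0" "\<alpha> > 0" "w > 0" "N * m > \<alpha>"
    and "g \<ge> 0" "0 < \<tau>" "\<tau> < 1" "Lg \<ge> 0"
    and "\<alpha> > 1 - \<tau>"
  shows "\<exists>dg dL.
           ((\<lambda>x. Pi_eq N m F \<alpha> w x \<tau> Lg) has_real_derivative dg) (at g) \<and>
           ((\<lambda>x. Pi_eq N m F \<alpha> w g \<tau> x) has_real_derivative dL) (at Lg) \<and>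
           dg > dL"
proof -
  note A = assms
  define t where "t = 1 - \<tau>"
  have t: "0 < t" "t < 1" "\<alpha> > t" using A by (auto simp: t_def)
  define c where "c = N * m + \<alpha> * t"
  define D where "D = \<alpha> + (N * m - \<alpha>) * \<tau>"
  have Dt: "D = \<alpha> * t + N * m * (1 - t)" by (simp add: D_def t_def algebra_simps)
  have c0: "c > 0" using A t by (simp add: c_def add_pos_pos)
  have D0: "D > 0" using A t unfolding Dt by (simp add: add_pos_nonneg)
  have DNm: "D < N * m"
  proof -
    have "\<alpha> * t < N * m * t" using A t by (intro mult_strict_right_mono) auto
    thus ?thesis unfolding Dt by (simp add: algebra_simps)
  qed
  have Dgt: "D > t"
  proof -
    have "t * t < \<alpha> * t" using A t by (intro mult_strict_right_mono) auto
    moreover have "t * (1 - t) < N * m * (1 - t)" using A t by (intro mult_strict_right_mono) auto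
    ultimately show ?thesis unfolding Dt by (simp add: algebra_simps)
  qed
  define a where "a = N * N * m * m / D"
  define b where "b = c / D"
  have a_gt: "a > \<alpha>"
  proof -
    have "N*m*D < N*m*(N*m)" using DNm A by (intro mult_strict_left_mono) auto
    hence "N*m < a" using D0 by (simp add: a_def pos_less_divide_eq mult_ac)
    thus ?thesis using A by simp
  qed
  have b0: "b > 0" using c0 D0 by (simp add: b_def)
  define A0 where "A0 = N * (t * (m * Lg + \<alpha> * F) + F * m * N) / D"
  have A0: "A0 > 0"
  proof -
    have "t * (m * Lg + \<alpha> * F) \<ge> 0" using A t by simp
    moreover have "F * m * N > 0" using A by simp
    ultimately have "t * (m * Lg + \<alpha> * F) + F * m * N > 0" by linarith
    thus ?thesis unfolding A0_def using A D0 by simp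
  qed
  define P where "P = A0 + Lg"
  have P0: "P > 0" using A0 A by (simp add: P_def)
  have Lg_lin: "\<And>x. L_eq N m F \<alpha> w x \<tau> Lg = A0 + a * x"
    unfolding L_eq_def D_def[symmetric] A0_def a_def t_def using D0
    by (simp add: divide_simps) (simp add: algebra_simps)
  define B0 where "B0 = N * (t * (\<alpha> * F) + (m * g + F) * m * N) / D"
  have LL_lin: "\<And>y. L_eq N m F \<alpha> w g \<tau> y + y = B0 + b * y"
    unfolding L_eq_def D_def[symmetric] B0_def b_def c_def t_def using D0 Dt
    by (simp add: divide_simps) (simp add: algebra_simps t_def)
  define S where "S = P + a * g"
  have SB: "S = B0 + b * Lg" using LL_lin[of Lg] Lg_lin[of g] by (simp add: S_def P_def)
  define u where "u = S - \<alpha> * g"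
  have u0: "u > 0"
  proof -
    have "(a - \<alpha>) * g \<ge> 0" using a_gt A by simp
    thus ?thesis unfolding u_def S_def using P0 by (simp add: algebra_simps)
  qed
  have Sag: "S \<ge> a * g" using P0 by (simp add: S_def)
  have S0: "S > 0" using u0 A by (simp add: u_def) (smt (verit) mult_nonneg_nonneg)
  have Su: "S = u + \<alpha> * g" by (simp add: u_def)
  have u0': "P + a * g - \<alpha> * g \<noteq> 0" using u0 by (simp add: u_def S_def)
  define dg where "dg = w * (t * a / N - t * m * (a - \<alpha>) / c + (c / N) * (S\<^sup>2 - \<alpha> * a * g\<^sup>2) / u\<^sup>2 - m)"
  define dL where "dL = w * (t * b / N - t * m * b / c - (c / N) * g\<^sup>2 * \<alpha> * b / u\<^sup>2)"
  define Cg where "Cg = (\<lambda>x. w * (t * (P + a * x) / N - t * m * ((P + a * x) - \<alpha> * x) / c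
      + c * x * (P + a * x) / (N * ((P + a * x) - \<alpha> * x)) - x * m - F))"
  have dCg: "(Cg has_real_derivative dg) (at g)"
    unfolding Cg_def using u0' A
    apply (auto intro!: derivative_eq_intros simp: c0[THEN less_imp_neq, symmetric])
    unfolding S_def[symmetric] u_def[symmetric] dg_def unfolding Su
    using u0 A c0 by (simp add: field_simps power2_eq_square)
  define Cl where "Cl = (\<lambda>y. w * (t * (B0 + b * y) / N - t * m * ((B0 + b * y) - \<alpha> * g) / c
      + c * g * (B0 + b * y) / (N * ((B0 + b * y) - \<alpha> * g)) - g * m - F))"
  have u0'': "B0 + b * Lg - \<alpha> * g \<noteq> 0" using u0 by (simp add: u_def SB)
  have dCl: "(Cl has_real_derivative dL) (at Lg)"
    unfolding Cl_def using u0'' A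
    apply (auto intro!: derivative_eq_intros simp: c0[THEN less_imp_neq, symmetric])
    unfolding SB[symmetric] u_def[symmetric] dL_def unfolding Su
    using u0 A c0 by (simp add: field_simps power2_eq_square)
  have dPg: "((\<lambda>x. Pi_eq N m F \<alpha> w x \<tau> Lg) has_real_derivative dg) (at g)"
  proof (rule has_field_derivative_transform_within_open[OF dCg])
    show "open {x::real. 0 < P + a*x \<and> 0 < P + a*x - \<alpha>*x}"
      by (intro open_Collect_conj open_Collect_less continuous_intros)
    show "g \<in> {x::real. 0 < P + a*x \<and> 0 < P + a*x - \<alpha>*x}"
      using S0 u0 by (simp add: S_def u_def)
    fix x assume "x \<in> {x::real. 0 < P + a*x \<and> 0 < P + a*x - \<alpha>*x}"
    hence h: "L_eq N m F \<alpha> w x \<tau> Lg + Lg \<noteq> 0" "L_eq N m F \<alpha> w x \<tau> Lg + Lg - \<alpha> * x \<noteq> 0"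
      by (auto simp: Lg_lin P_def add_ac)
    show "Cg x = Pi_eq N m F \<alpha> w x \<tau> Lg"
      using Pi_closed[OF A(1) _ h] c0
      by (simp add: Cg_def Let_def Lg_lin P_def c_def t_def add_ac)
  qed
  have dPl: "((\<lambda>y. Pi_eq N m F \<alpha> w g \<tau> y) has_real_derivative dL) (at Lg)"
  proof (rule has_field_derivative_transform_within_open[OF dCl])
    show "open {y::real. 0 < B0 + b*y \<and> 0 < B0 + b*y - \<alpha>*g}"
      by (intro open_Collect_conj open_Collect_less continuous_intros)
    show "Lg \<in> {y::real. 0 < B0 + b*y \<and> 0 < B0 + b*y - \<alpha>*g}"
      using S0 u0 by (simp add: SB u_def)
    fix y assume "y \<in> {y::real. 0 < B0 + b*y \<and> 0 < B0 + b*y - \<alpha>*g}"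
    hence h: "L_eq N m F \<alpha> w g \<tau> y + y \<noteq> 0" "L_eq N m F \<alpha> w g \<tau> y + y - \<alpha> * g \<noteq> 0"
      by (auto simp: LL_lin)
    show "Cl y = Pi_eq N m F \<alpha> w g \<tau> y"
      using Pi_closed[OF A(1) _ h] c0
      by (simp add: Cl_def Let_def LL_lin c_def t_def)
  qed
  have key: "S\<^sup>2 - \<alpha> * a * g\<^sup>2 + \<alpha> * b * g\<^sup>2 \<ge> u\<^sup>2"
  proof -
    have "S\<^sup>2 - \<alpha> * a * g\<^sup>2 + \<alpha> * b * g\<^sup>2 - u\<^sup>2 = \<alpha> * g * (2 * S - a * g + b * g - \<alpha> * g)"
      by (simp add: u_def power2_eq_square algebra_simps)
    also have "\<dots> \<ge> 0"
    proof -
      have "2 * S - a * g + b * g - \<alpha> * g \<ge> g * (a + b - \<alpha>)" using Sag by (simp add: algebra_simps)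
      moreover have "g * (a + b - \<alpha>) \<ge> 0" using A a_gt b0 by simp
      ultimately show ?thesis using A by simp
    qed
    finally show ?thesis by simp
  qed
  have ge: "(c / N) * (S\<^sup>2 - \<alpha> * a * g\<^sup>2) / u\<^sup>2 + (c / N) * g\<^sup>2 * \<alpha> * b / u\<^sup>2 \<ge> c / N"
  proof -
    have "(c / N) * (S\<^sup>2 - \<alpha> * a * g\<^sup>2) / u\<^sup>2 + (c / N) * g\<^sup>2 * \<alpha> * b / u\<^sup>2
        = (c / N) * ((S\<^sup>2 - \<alpha> * a * g\<^sup>2 + \<alpha> * b * g\<^sup>2) / u\<^sup>2)"
      using u0 A by (simp add: field_simps)
    moreover have "(S\<^sup>2 - \<alpha> * a * g\<^sup>2 + \<alpha> * b * g\<^sup>2) / u\<^sup>2 \<ge> 1" using key u0 by simp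
    moreover have "c / N > 0" using c0 A by simp
    ultimately show ?thesis by (metis mult.right_neutral mult_left_mono less_imp_le)
  qed
  define R where "R = t * a / N - t * m * (a - \<alpha>) / c - m - t * b / N + t * m * b / c + c / N"
  have R_eq: "R = \<alpha> * t * t * a / (N * c) + t * m * \<alpha> / c + (\<alpha> * t / N) * (1 - t / D)"
    unfolding R_def b_def using c0 D0 A apply (simp add: field_simps) unfolding c_def by algebra
  have R0: "R > 0"
  proof -
    have "1 - t / D > 0" using Dgt D0 by simp
    hence "(\<alpha> * t / N) * (1 - t / D) > 0" using A t by simp
    moreover have "\<alpha> * t * t * a / (N * c) > 0" using A t a_gt c0 by simp
    moreover have "t * m * \<alpha> / c > 0" using A t c0 by simp
    ultimately show ?thesis unfolding R_eq by linarith
  qed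
  have "dg - dL = w * (R - c / N + ((c / N) * (S\<^sup>2 - \<alpha> * a * g\<^sup>2) / u\<^sup>2 + (c / N) * g\<^sup>2 * \<alpha> * b / u\<^sup>2))"
    unfolding dg_def dL_def R_def by (simp add: algebra_simps)
  moreover have "R - c / N + ((c / N) * (S\<^sup>2 - \<alpha> * a * g\<^sup>2) / u\<^sup>2 + (c / N) * g\<^sup>2 * \<alpha> * b / u\<^sup>2) > 0"
    using ge R0 by linarith
  ultimately have "dg - dL > 0" using A by simp
  thus ?thesis using dPg dPl by auto
qed
end
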